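(* Let $M\in\mathbb N$, $\alpha\in\mathbb N$, and let $f$ be a polynomial of degree at most $M$. Then $$\int_0^\pi f(\cos\vartheta)\sin^\alpha\vartheta\,d\vartheta=\sum_{u=0}^M\chi_u\, f\!\left(\cos\frac{u\pi}{M}\right),$$ where $\chi_u=\epsilon_u\,\omega_u$ with $\epsilon_0=\epsilon_M=\tfrac12$, $\epsilon_u=1$ for $u=1,\dots,M-1$ (and $\epsilon_{2\mu}$ defined by the same rule), and $$\omega_u=\frac{\pi\,\alpha!}{2^{\alpha-1}M}\sum_{\mu=0}^{\lfloor M/2\rfloor}\frac{\epsilon_{2\mu}(-1)^{\mu}\cos\frac{2\mu u\pi}{M}}{\Gamma\left(\frac{\alpha}{2}-\mu+1\right)\Gamma\left(\frac{\alpha}{2}+\mu+1\right)},$$ where a summand is understood to be $0$ whenever $\frac{\alpha}{2}-\mu+1$ is a non-positive integer (i.e. $1/\Gamma$ is taken to be $0$ at the poles of $\Gamma$).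
   Context: $\Gamma$ denotes the Euler Gamma function and $\lfloor\cdot\rfloor$ the integer part. *)

theory Defs
  imports "HOL-Analysis.Analysis" "HOL-Computational_Algebra.Polynomial"
begin

definition quad_eps :: "nat \<Rightarrow> nat \<Rightarrow> real" where
  "quad_eps M u = (if u = 0 \<or> u = M then 1/2 else 1)"

text \<open>omega weights; rGamma is the reciprocal Gamma function (0 at the poles).\<close>
definition quad_omega :: "nat \<Rightarrow> nat \<Rightarrow> nat \<Rightarrow> real" where
  "quad_omega M \<alpha> u =
     pi * fact \<alpha> / (2 powr (real \<alpha> - 1) * real M) *
     (\<Sum>\<mu> = 0..M div 2. quad_eps M (2*\<mu>) * (-1) ^ \<mu> * cos (real (2*\<mu>*u) * pi / real M)
        * rGamma (real \<alpha> / 2 - real \<mu> + 1) * rGamma (real \<alpha> / 2 + real \<mu> + 1))"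

definition quad_chi :: "nat \<Rightarrow> nat \<Rightarrow> nat \<Rightarrow> real" where
  "quad_chi M \<alpha> u = quad_eps M u * quad_omega M \<alpha> u"

end

theory Submission
  imports Defs
begin

lemma cos_int_integral:
  fixes n :: int
  shows "((\<lambda>t. cos (of_int n * t)) has_integral (if n = 0 then pi else 0)) {0..pi}"
proof (cases "n = 0")
  case True then show ?thesis using has_integral_const_real[of "1::real" 0 pi] by simp
next
  case False
  have "((\<lambda>t. cos (of_int n * t)) has_integral (sin (of_int n * pi) / n - sin (of_int n * 0) / n)) {0..pi}"
    by (rule fundamental_theorem_of_calculus)
       (use False in \<open>auto intro!: derivative_eq_intros simp: has_real_derivative_iff_has_vector_derivative[symmetric]\<close>)
  then show ?thesis using False by (simp add: mult.commute)
qed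

lemma sin_int_integral:
  fixes n :: int
  shows "((\<lambda>t. sin (of_int n * t)) has_integral (if n = 0 then 0 else (1 - (if even n then 1 else -1)) / n)) {0..pi}"
proof (cases "n = 0")
  case True then show ?thesis by simp
next
  case False
  have "((\<lambda>t. sin (of_int n * t)) has_integral ((- cos (of_int n * pi) / n) - (- cos (of_int n * 0) / n))) {0..pi}"
    by (rule fundamental_theorem_of_calculus)
       (use False in \<open>auto intro!: derivative_eq_intros simp: has_real_derivative_iff_has_vector_derivative[symmetric]\<close>)
  then show ?thesis using False by (simp add: mult.commute diff_divide_distrib)
qed

definition sgnf :: "int \<Rightarrow> real" where "sgnf m = (if even m then 1 else -1)"

definition Gf :: "nat \<Rightarrow> int \<Rightarrow> real" where
 "Gf a m = pi * fact a / 2^a * sgnf m * rGamma (real a/2 + of_int m + 1) * rGamma (real a/2 - of_int m + 1)"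

lemma Gf_rec: "Gf (a+2) m = Gf a m / 2 - (Gf a (m+1) + Gf a (m-1)) / 4"
proof -
  define x where "x = real a / 2"
  define R where "R = rGamma (x + of_int m + 2) * rGamma (x - of_int m + 2)"
  have e1: "rGamma (x + of_int m + 1) = (x + of_int m + 1) * rGamma (x + of_int m + 2)"
    using rGamma_plus1[of "x + of_int m + 1"] by (simp add: add.assoc)
  have e2: "rGamma (x - of_int m + 1) = (x - of_int m + 1) * rGamma (x - of_int m + 2)"
    using rGamma_plus1[of "x - of_int m + 1"] by (simp add: add.assoc)
  have e3: "rGamma (x - of_int m) = (x - of_int m) * rGamma (x - of_int m + 1)"
    using rGamma_plus1[of "x - of_int m"] by (simp add: add.assoc)
  have e4: "rGamma (x + of_int m) = (x + of_int m) * rGamma (x + of_int m + 1)"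
    using rGamma_plus1[of "x + of_int m"] by (simp add: add.assoc)
  have s: "sgnf (m+1) = - sgnf m" "sgnf (m-1) = - sgnf m" by (auto simp: sgnf_def)
  have x2: "real (a+2) / 2 = x + 1" by (simp add: x_def field_simps)
  have f: "fact (a+2) = (real a + 2) * (real a + 1) * fact a"
    by (simp add: algebra_simps)
  define C where "C = pi * fact a / 2^a * sgnf m"
  have "Gf (a+2) m = pi * fact a / 2^a * sgnf m * ((real a + 2) * (real a + 1) / 4) * R"
    unfolding Gf_def x2 f R_def by (simp add: field_simps)
  then have g0: "Gf (a+2) m = C * ((real a + 2) * (real a + 1) / 4) * R" by (simp add: C_def)
  have "Gf a m = C * rGamma (x + of_int m + 1) * rGamma (x - of_int m + 1)"
    unfolding Gf_def C_def x_def by simp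
  also have "\<dots> = C * ((x + of_int m + 1) * (x - of_int m + 1)) * R"
    unfolding e1 e2 R_def by (simp only: ac_simps)
  finally have g1: "Gf a m = C * ((x + of_int m + 1) * (x - of_int m + 1)) * R" .
  have "Gf a (m+1) = - (C * rGamma (x + of_int m + 2) * rGamma (x - of_int m))"
    unfolding Gf_def C_def x_def s by (simp add: algebra_simps)
  also have "\<dots> = - (C * ((x - of_int m) * (x - of_int m + 1)) * R)"
    unfolding e3 e2 R_def by (simp only: ac_simps)
  finally have g2: "Gf a (m+1) = - (C * ((x - of_int m) * (x - of_int m + 1)) * R)" .
  have "Gf a (m-1) = - (C * rGamma (x + of_int m) * rGamma (x - of_int m + 2))"
    unfolding Gf_def C_def x_def s by (simp add: algebra_simps)
  also have "\<dots> = - (C * ((x + of_int m) * (x + of_int m + 1)) * R)"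
    unfolding e4 e1 R_def by (simp only: ac_simps)
  finally have g3: "Gf a (m-1) = - (C * ((x + of_int m) * (x + of_int m + 1)) * R)" .
  note g0 g1 g2 g3
  moreover have "(real a + 2) * (real a + 1) / 4 = (x + of_int m + 1) * (x - of_int m + 1) / 2
     + ((x - of_int m) * (x - of_int m + 1) + (x + of_int m) * (x + of_int m + 1)) / 4"
    unfolding x_def by (simp add: field_simps)
  moreover have "\<And>C P Q1 Q2 Q3 R::real. P = Q1/2 + (Q2+Q3)/4 \<Longrightarrow>
     C*P*R = C*Q1*R/2 - (-(C*Q2*R) + -(C*Q3*R))/4"
    by (hypsubst, simp add: field_simps)
  ultimately show ?thesis by metis
qed

definition Hf :: "nat \<Rightarrow> int \<Rightarrow> real" where
  "Hf a k = (if even k then Gf a (k div 2) else 0)"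

lemma Hf_rec: "Hf (a+2) k = Hf a k / 2 - (Hf a (k+2) + Hf a (k-2)) / 4"
proof (cases "even k")
  case True
  then obtain m where k: "k = 2*m" by blast
  have "(k+2) div 2 = m + 1" "(k-2) div 2 = m - 1" "k div 2 = m" using k by auto
  then show ?thesis using True Gf_rec[of a m] by (simp add: Hf_def)
qed (simp add: Hf_def)

lemma Gf_neg: "Gf a (-m) = Gf a m"
  by (simp add: Gf_def sgnf_def algebra_simps)

lemma Gf_0: "Gf 0 m = (if m = 0 then pi else 0)"
proof -
  have "m \<noteq> 0 \<Longrightarrow> rGamma (real_of_int m + 1) * rGamma (1 - real_of_int m) = 0"
  proof -
    assume "m \<noteq> 0"
    then have "m + 1 \<le> 0 \<or> 1 - m \<le> 0" by auto
    then show ?thesis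
    proof
      assume "m + 1 \<le> 0"
      then have "rGamma (real_of_int (m+1)) = 0" by (simp add: rGamma_eq_zero_iff nonpos_Ints_of_int del: of_int_add)
      then show ?thesis by simp
    next
      assume "1 - m \<le> 0"
      then have "rGamma (real_of_int (1 - m)) = 0" by (simp add: rGamma_eq_zero_iff nonpos_Ints_of_int del: of_int_diff)
      then show ?thesis by simp
    qed
  qed
  then show ?thesis by (auto simp: Gf_def sgnf_def)
qed

lemma Gf_1_nat: "Gf 1 (int m) = 2 / (1 - 4 * real m ^ 2)"
proof (induction m)
  case 0
  have "(1/2) * rGamma (1/2 + 1 :: real) = rGamma (1/2)" by (rule rGamma_plus1)
  then have h: "2 * Gamma (3/2::real) = sqrt pi"
    using Gamma_real_pos[of "3/2"] by (simp add: rGamma_inverse_Gamma Gamma_one_half_real field_simps)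
  have "rGamma (3/2 :: real) = 2 / sqrt pi"
    unfolding rGamma_inverse_Gamma h[symmetric] using Gamma_real_pos[of "3/2"] by (simp add: field_simps)
  then show ?case by (simp add: Gf_def sgnf_def power2_eq_square)
next
  case (Suc m)
  define y where "y = real m"
  have e1: "rGamma (1/2 + y + 1) = (1/2 + y + 1) * rGamma (1/2 + y + 2)"
    using rGamma_plus1[of "1/2 + y + 1"] by (simp add: add.assoc)
  have e2: "rGamma (1/2 - y) = (1/2 - y) * rGamma (1/2 - y + 1)"
    using rGamma_plus1[of "1/2 - y"] by (simp add: add.assoc)
  have A: "Gf 1 (int m) = pi / 2 * sgnf (int m) * rGamma (1/2 + y + 1) * rGamma (1/2 - y + 1)"
    by (simp add: Gf_def y_def)
  have B: "Gf 1 (int (Suc m)) = - (pi / 2 * sgnf (int m) * rGamma (1/2 + y + 2) * rGamma (1/2 - y))"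
    by (simp add: Gf_def y_def sgnf_def algebra_simps)
  have "Gf 1 (int (Suc m)) * (3/2 + y) = - Gf 1 (int m) * (1/2 - y)"
    unfolding A B e1 e2 by (simp add: field_simps)
  then have "Gf 1 (int (Suc m)) * (3/2 + y) = - 2 / (1 - 4 * y ^ 2) * (1/2 - y)"
    using Suc by (simp add: y_def)
  moreover have "1 - 2*y \<noteq> 0"
  proof
    assume "1 - 2*y = 0" then have "2 * real m = 1" by (simp add: y_def)
    then have "2 * m = (1::nat)" by linarith
    then show False by presburger
  qed
  moreover have "1 + 2*y \<noteq> 0" "3 + 2 * y \<noteq> 0" "3/2 + y \<noteq> 0"
    by (auto simp: y_def)
  moreover have "1 - 4 * y^2 \<noteq> 0"
  proof -
    have "1 - 4 * y^2 = (1 - 2*y) * (1 + 2*y)" by (simp add: algebra_simps power2_eq_square)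
    then show ?thesis using calculation(2,3) by simp
  qed
  ultimately have "- 2 / (1 - 4 * y ^ 2) * (1/2 - y) = - 1 / (1 + 2*y)"
    by (simp add: field_simps power2_eq_square)
  then have "Gf 1 (int (Suc m)) * (3/2 + y) = - 1 / (1 + 2*y)"
    using \<open>Gf 1 (int (Suc m)) * (3/2 + y) = - 2 / (1 - 4 * y ^ 2) * (1/2 - y)\<close> by simp
  moreover have "Gf 1 (int (Suc m)) = Gf 1 (int (Suc m)) * (3/2 + y) / (3/2 + y)"
    using \<open>3/2 + y \<noteq> 0\<close> by simp
  ultimately have "Gf 1 (int (Suc m)) = - 1 / (1 + 2*y) / (3/2 + y)" by simp
  also have "\<dots> = - 2 / ((1 + 2*y) * (3 + 2*y))"
    using \<open>3/2 + y \<noteq> 0\<close> \<open>1 + 2*y \<noteq> 0\<close> \<open>3 + 2*y \<noteq> 0\<close> by (simp add: field_simps)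
  finally have "Gf 1 (int (Suc m)) = - 2 / ((1 + 2*y) * (3 + 2*y))" .
  moreover have "1 - 4 * real (Suc m) ^ 2 = - ((1 + 2*y) * (3 + 2*y))"
    by (simp add: y_def algebra_simps power2_eq_square)
  ultimately show ?case by simp
qed

lemma Gf_1: "Gf 1 m = 2 / (1 - 4 * real_of_int m ^ 2)"
proof (cases "m \<ge> 0")
  case True
  then show ?thesis using Gf_1_nat[of "nat m"] by simp
next
  case False
  then show ?thesis using Gf_1_nat[of "nat (-m)"] Gf_neg[of 1 m] by simp
qed

lemma Hf_0: "Hf 0 k = (if k = 0 then pi else 0)"
  by (auto simp: Hf_def Gf_0)

lemma main_integral:
  "((\<lambda>t. cos (of_int k * t) * sin t ^ a) has_integral Hf a k) {0..pi}"
proof (induction a arbitrary: k rule: nat_induct2)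
  case 0
  then show ?case using cos_int_integral[of k] by (simp add: Hf_0)
next
  case 1
  have eq: "cos (of_int k * t) * sin t ^ 1 = sin (of_int (1+k) * t) / 2 + sin (of_int (1-k) * t) / 2" for t :: real
    using sin_times_cos[of t "of_int k * t"] by (simp add: algebra_simps add_divide_distrib)
  let ?v = "\<lambda>n::int. (if n = 0 then 0 else (1 - (if even n then 1 else -1)) / real_of_int n)"
  have "((\<lambda>t. sin (of_int (1+k) * t) / 2 + sin (of_int (1-k) * t) / 2) has_integral (?v (1+k) / 2 + ?v (1-k) / 2)) {0..pi}"
    by (intro has_integral_add has_integral_divide sin_int_integral)
  moreover have "?v (1+k) / 2 + ?v (1-k) / 2 = Hf 1 k"
  proof (cases "even k")
    case True
    then obtain m where k: "k = 2*m" by blast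
    have "1 + 2 * m \<noteq> 0" "1 - 2*m \<noteq> 0" by presburger+
    then have "real_of_int (1 + 2 * m) \<noteq> 0" "real_of_int (1 - 2*m) \<noteq> 0" by linarith+
    then have "1 + 2 * real_of_int m \<noteq> 0" "1 - 2 * real_of_int m \<noteq> 0" by simp_all
    moreover have "1 - 4 * real_of_int m ^ 2 \<noteq> 0"
    proof -
      have "1 - 4 * real_of_int m ^ 2 = (1 - 2 * real_of_int m) * (1 + 2 * real_of_int m)"
        by (simp add: algebra_simps power2_eq_square)
      then show ?thesis using calculation by simp
    qed
    moreover have "Hf 1 k = 2 / (1 - 4 * real_of_int m ^ 2)" using k Gf_1[of m] by (simp add: Hf_def)
    ultimately show ?thesis using True k by (simp add: field_simps power2_eq_square)
  next
    case False
    then show ?thesis by (simp add: Hf_def)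
  qed
  ultimately have I: "((\<lambda>t. sin (of_int (1+k) * t) / 2 + sin (of_int (1-k) * t) / 2) has_integral Hf 1 k) {0..pi}"
    by simp
  show ?case by (rule has_integral_eq[OF _ I]) (simp only: eq)
next
  case (step a)
  have eq: "cos (of_int k * t) * sin t ^ (a+2) = (cos (of_int k * t) * sin t ^ a) / 2
     - ((cos (of_int (k+2) * t) * sin t ^ a) + (cos (of_int (k-2) * t) * sin t ^ a)) / 4" for t :: real
  proof -
    have s2: "sin t ^ 2 = (1 - cos (2*t)) / 2" by (simp add: cos_double_sin)
    have c: "cos (of_int k * t) * cos (2*t) = (cos (of_int (k-2) * t) + cos (of_int (k+2) * t)) / 2"
      using cos_times_cos[of "of_int k * t" "2*t"] by (simp add: algebra_simps)
    have "cos (of_int k * t) * sin t ^ (a+2) = sin t ^ a * (cos (of_int k * t) * sin t ^ 2)"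
      by (simp add: power_add power2_eq_square)
    also have "\<dots> = sin t ^ a * (cos (of_int k * t) / 2 - (cos (of_int k * t) * cos (2*t)) / 2)"
      by (simp add: s2 algebra_simps diff_divide_distrib)
    also have "\<dots> = (cos (of_int k * t) * sin t ^ a) / 2
     - ((cos (of_int (k+2) * t) * sin t ^ a) + (cos (of_int (k-2) * t) * sin t ^ a)) / 4"
      unfolding c by (simp add: algebra_simps)
    finally show ?thesis .
  qed
  have "((\<lambda>t. (cos (of_int k * t) * sin t ^ a) / 2
     - ((cos (of_int (k+2) * t) * sin t ^ a) + (cos (of_int (k-2) * t) * sin t ^ a)) / 4)
     has_integral (Hf a k / 2 - (Hf a (k+2) + Hf a (k-2)) / 4)) {0..pi}"
    by (intro has_integral_diff has_integral_add has_integral_divide step)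
  then show ?case unfolding Hf_rec by (rule has_integral_eq[rotated]) (simp only: eq)
qed

lemma tele_cos:
  "2 * sin (x/2) * (\<Sum>u=0..N. cos (real u * x)) = sin ((real N + 1/2) * x) + sin (x/2)"
proof (induction N)
  case 0 then show ?case by simp
next
  case (Suc N)
  have "2 * sin (x/2) * cos (real (Suc N) * x) = sin (x/2 + real (Suc N) * x) + sin (x/2 - real (Suc N) * x)"
    using sin_times_cos[of "x/2" "real (Suc N) * x"] by simp
  also have "x/2 + real (Suc N) * x = (real (Suc N) + 1/2) * x" by (simp add: algebra_simps)
  also have "x/2 - real (Suc N) * x = - ((real N + 1/2) * x)" by (simp add: algebra_simps)
  finally have "2 * sin (x/2) * cos (real (Suc N) * x) = sin ((real (Suc N) + 1/2) * x) - sin ((real N + 1/2) * x)"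
    by simp
  then show ?case using Suc by (simp add: distrib_left)
qed

lemma eps_sum:
  assumes "M \<ge> 1"
  shows "(\<Sum>u=0..M. quad_eps M u * g u) = (\<Sum>u=0..M. g u) - (g 0 + g M) / 2"
proof -
  have "quad_eps M u * g u = g u - (if u = 0 then g 0 / 2 else 0) - (if u = M then g M / 2 else 0)" for u
    using assms by (auto simp: quad_eps_def)
  then have "(\<Sum>u=0..M. quad_eps M u * g u) = (\<Sum>u=0..M. g u - (if u = 0 then g 0 / 2 else 0) - (if u = M then g M / 2 else 0))"
    by simp
  also have "\<dots> = (\<Sum>u=0..M. g u) - (g 0 + g M) / 2"
    by (simp add: sum_subtractf add_divide_distrib)
  finally show ?thesis .
qed

lemma trap_sum:
  fixes n :: int
  assumes M: "M \<ge> 1"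
  shows "(\<Sum>u=0..M. quad_eps M u * cos (of_int n * (real u * pi / real M))) = (if (2 * int M) dvd n then real M else 0)"
proof (cases "(2 * int M) dvd n")
  case True
  then obtain j where n: "n = 2 * int M * j" by blast
  have "cos (of_int n * (real u * pi / real M)) = 1" for u
  proof -
    have "of_int n * (real u * pi / real M) = (2 * pi) * of_int (j * int u)"
      using M by (simp add: n field_simps)
    then show ?thesis by (simp only: cos_int_2pin)
  qed
  then show ?thesis using True eps_sum[OF M, of "\<lambda>_. 1"] by simp
next
  case False
  define x where "x = of_int n * pi / real M"
  have cx: "cos (of_int n * (real u * pi / real M)) = cos (real u * x)" for u
    by (simp add: x_def mult.commute mult.left_commute)
  have "2 * sin (x/2) * (\<Sum>u=0..M. quad_eps M u * cos (real u * x))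
      = 2 * sin (x/2) * (\<Sum>u=0..M. cos (real u * x)) - sin (x/2) * (1 + cos (real M * x))"
    unfolding eps_sum[OF M] by (simp add: field_simps)
  also have "\<dots> = sin (real M * x) * cos (x/2)"
    unfolding tele_cos
  proof -
    have "(real M + 1/2) * x = real M * x + x/2" by (simp add: algebra_simps)
    then show "sin ((real M + 1/2) * x) + sin (x/2) - sin (x/2) * (1 + cos (real M * x)) = sin (real M * x) * cos (x/2)"
      by (simp add: sin_add algebra_simps)
  qed
  also have "sin (real M * x) = 0"
  proof -
    have "real M * x = pi * of_int n" using M by (simp add: x_def)
    then show ?thesis by simp
  qed
  finally have z: "sin (x/2) * (\<Sum>u=0..M. quad_eps M u * cos (real u * x)) = 0" by simp
  have "sin (x/2) \<noteq> 0"
  proof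
    assume "sin (x/2) = 0"
    then obtain i :: int where "x/2 = of_int i * pi" by (auto simp: sin_zero_iff_int2)
    then have "of_int n = real_of_int (2 * int M * i)" using M by (simp add: x_def field_simps)
    then have "n = 2 * int M * i" by linarith
    then show False using False by simp
  qed
  then show ?thesis unfolding cx using z False by simp
qed

lemma dvd_small_int:
  fixes d N :: int
  assumes "N dvd d" "\<bar>d\<bar> < N"
  shows "d = 0"
proof -
  obtain q where d: "d = N * q" using assms(1) by blast
  have "N > 0" using assms(2) by linarith
  show ?thesis
  proof (rule ccontr)
    assume "d \<noteq> 0"
    then have "\<bar>q\<bar> \<ge> 1" using d by auto
    then have "N * 1 \<le> N * \<bar>q\<bar>" using \<open>N > 0\<close> by (intro mult_left_mono) auto
    then show False using assms(2) d \<open>N > 0\<close> by (simp add: abs_mult)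
  qed
qed

lemma disc_orth:
  assumes M: "M \<ge> 1" and "m \<le> M" "k \<le> M"
  shows "quad_eps M m * (\<Sum>u=0..M. quad_eps M u * (cos (real m * (real u * pi / real M)) * cos (real k * (real u * pi / real M))))
       = (if m = k then real M / 2 else 0)"
proof -
  define T where "T n = (\<Sum>u=0..M. quad_eps M u * cos (of_int n * (real u * pi / real M)))" for n :: int
  have cc: "cos (real m * y) * cos (real k * y) = (cos (of_int (int m - int k) * y) + cos (of_int (int m + int k) * y)) / 2" for y
    using cos_times_cos[of "real m * y" "real k * y"] by (simp add: algebra_simps)
  have pw: "quad_eps M u * (cos (real m * y) * cos (real k * y)) = 
     (quad_eps M u * cos (of_int (int m - int k) * y) + quad_eps M u * cos (of_int (int m + int k) * y)) / 2" for u y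
    by (simp only: cc) (simp add: algebra_simps add_divide_distrib)
  have "(\<Sum>u=0..M. quad_eps M u * (cos (real m * (real u * pi / real M)) * cos (real k * (real u * pi / real M))))
      = (\<Sum>u=0..M. (quad_eps M u * cos (of_int (int m - int k) * (real u * pi / real M)) + quad_eps M u * cos (of_int (int m + int k) * (real u * pi / real M))) / 2)"
    by (simp only: pw)
  also have "\<dots> = (T (int m - int k) + T (int m + int k)) / 2"
    unfolding T_def by (simp only: sum_divide_distrib[symmetric] sum.distrib)
  finally have "(\<Sum>u=0..M. quad_eps M u * (cos (real m * (real u * pi / real M)) * cos (real k * (real u * pi / real M))))
      = (T (int m - int k) + T (int m + int k)) / 2" .
  also have "T (int m - int k) = (if m = k then real M else 0)"
  proof -
    have "(2 * int M) dvd (int m - int k) \<longleftrightarrow> m = k"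
    proof
      assume "(2 * int M) dvd (int m - int k)"
      moreover have "\<bar>int m - int k\<bar> < 2 * int M" using assms by auto
      ultimately have "int m - int k = 0" by (rule dvd_small_int)
      then show "m = k" by simp
    qed simp
    then show ?thesis unfolding T_def using trap_sum[OF M, of "int m - int k"] by simp
  qed
  also have "T (int m + int k) = (if m = k \<and> (k = 0 \<or> k = M) then real M else 0)"
  proof -
    have "(2 * int M) dvd (int m + int k) \<longleftrightarrow> m = k \<and> (k = 0 \<or> k = M)"
    proof
      assume dv: "(2 * int M) dvd (int m + int k)"
      show "m = k \<and> (k = 0 \<or> k = M)"
      proof (cases "m + k = 2 * M")
        case True then show ?thesis using assms by auto
      next
        case False
        then have "\<bar>int m + int k\<bar> < 2 * int M" using assms by auto
        with dv have "int m + int k = 0" by (rule dvd_small_int)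
        then show ?thesis by simp
      qed
    next
      assume "m = k \<and> (k = 0 \<or> k = M)"
      then show "(2 * int M) dvd (int m + int k)" by auto
    qed
    then show ?thesis unfolding T_def using trap_sum[OF M, of "int m + int k"] by simp
  qed
  finally show ?thesis using M by (auto simp: quad_eps_def)
qed

lemma disc_weights:
  assumes M: "M \<ge> 1" and k: "k \<le> M"
  shows "(\<Sum>u=0..M. quad_chi M a u * cos (real k * (real u * pi / real M))) = Hf a (int k)"
proof -
  define c where "c j u = cos (real j * (real u * pi / real M))" for j u :: nat
  define B where "B \<mu> = (-1) ^ \<mu> * rGamma (real a / 2 - real \<mu> + 1) * rGamma (real a / 2 + real \<mu> + 1)" for \<mu> :: nat
  define K where "K = pi * fact a / (2 powr (real a - 1) * real M)"
  have om: "quad_omega M a u = K * (\<Sum>\<mu>=0..M div 2. B \<mu> * (quad_eps M (2*\<mu>) * c (2*\<mu>) u))" for u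
  proof -
    have e: "quad_eps M (2*\<mu>) * (-1) ^ \<mu> * cos (real (2*\<mu>*u) * pi / real M)
        * rGamma (real a / 2 - real \<mu> + 1) * rGamma (real a / 2 + real \<mu> + 1) = B \<mu> * (quad_eps M (2*\<mu>) * c (2*\<mu>) u)" for \<mu>
      unfolding B_def c_def by (simp add: mult_ac)
    show ?thesis unfolding quad_omega_def K_def by (simp only: e)
  qed
  have "(\<Sum>u=0..M. quad_chi M a u * c k u)
      = (\<Sum>u=0..M. \<Sum>\<mu>=0..M div 2. K * B \<mu> * (quad_eps M (2*\<mu>) * (quad_eps M u * (c (2*\<mu>) u * c k u))))"
    unfolding quad_chi_def om by (simp add: sum_distrib_left sum_distrib_right mult_ac)
  also have "\<dots> = (\<Sum>\<mu>=0..M div 2. K * B \<mu> * (quad_eps M (2*\<mu>) * (\<Sum>u=0..M. quad_eps M u * (c (2*\<mu>) u * c k u))))"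
    by (subst sum.swap) (simp add: sum_distrib_left)
  also have "\<dots> = (\<Sum>\<mu>=0..M div 2. K * B \<mu> * (if 2*\<mu> = k then real M / 2 else 0))"
  proof (intro sum.cong refl)
    fix \<mu> assume "\<mu> \<in> {0..M div 2}"
    then have "2*\<mu> \<le> M" by auto
    then show "K * B \<mu> * (quad_eps M (2*\<mu>) * (\<Sum>u=0..M. quad_eps M u * (c (2*\<mu>) u * c k u))) = K * B \<mu> * (if 2*\<mu> = k then real M / 2 else 0)"
      using disc_orth[OF M _ k, of "2*\<mu>"] unfolding c_def by simp
  qed
  also have "\<dots> = Hf a (int k)"
  proof (cases "even k")
    case True
    then obtain \<nu> where kn: "k = 2*\<nu>" by blast
    have "\<nu> \<in> {0..M div 2}" using k kn by auto
    have "(\<Sum>\<mu>=0..M div 2. K * B \<mu> * (if 2*\<mu> = k then real M / 2 else 0)) = 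
          (\<Sum>\<mu>=0..M div 2. (if \<mu> = \<nu> then K * B \<mu> * (real M / 2) else 0))"
      using kn by (intro sum.cong refl) auto
    also have "\<dots> = K * B \<nu> * (real M / 2)" using \<open>\<nu> \<in> _\<close> by simp
    also have "\<dots> = Gf a (int \<nu>)"
    proof -
      have p: "2 powr (real a - 1) = 2 ^ a / 2" by (simp add: powr_diff powr_realpow)
      have sg: "sgnf (int \<nu>) = (-1) ^ \<nu>" by (simp add: sgnf_def)
      show ?thesis unfolding K_def B_def Gf_def p sg using M by (simp add: field_simps)
    qed
    finally show ?thesis using kn by (simp add: Hf_def)
  next
    case False
    then have "2*\<mu> \<noteq> k" for \<mu> by auto
    then show ?thesis using False by (simp add: Hf_def)
  qed
  finally show ?thesis unfolding c_def .
qed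

definition Pq :: "nat \<Rightarrow> nat \<Rightarrow> (real \<Rightarrow> real) \<Rightarrow> bool" where
  "Pq M a g \<longleftrightarrow> ((\<lambda>t. g t * sin t ^ a) has_integral (\<Sum>u=0..M. quad_chi M a u * g (real u * pi / real M))) {0..pi}"

lemma Pq_base:
  assumes "M \<ge> 1" "k \<le> M"
  shows "Pq M a (\<lambda>t. cos (real k * t))"
  using main_integral[of "int k" a] disc_weights[OF assms, of a] unfolding Pq_def by simp

lemma Pq_lin:
  assumes "Pq M a g" "Pq M a h"
  shows "Pq M a (\<lambda>t. x * g t + y * h t)"
proof -
  have "((\<lambda>t. x * (g t * sin t ^ a) + y * (h t * sin t ^ a)) has_integral
     (x * (\<Sum>u=0..M. quad_chi M a u * g (real u * pi / real M)) + y * (\<Sum>u=0..M. quad_chi M a u * h (real u * pi / real M)))) {0..pi}"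
    using assms unfolding Pq_def by (intro has_integral_add has_integral_mult_right)
  then show ?thesis unfolding Pq_def
    by (simp add: algebra_simps sum.distrib sum_distrib_left)
qed

lemma Pq_Q:
  assumes M: "M \<ge> 1"
  shows "k + j \<le> M \<Longrightarrow> Pq M a (\<lambda>t. cos t ^ j * cos (real k * t))"
proof (induction j arbitrary: k)
  case 0
  then show ?case using Pq_base[OF M, of k a] by simp
next
  case (Suc j)
  note IH = Suc.IH and prems = Suc.prems
  show ?case
  proof (cases k)
    case 0
    have "Pq M a (\<lambda>t. cos t ^ j * cos (real 1 * t))" using IH[of 1] prems 0 by simp
    then show ?thesis using 0 by (simp add: mult.commute)
  next
    case (Suc k')
    have P1: "Pq M a (\<lambda>t. (1/2) * (cos t ^ j * cos (real (k+1) * t)) + (1/2) * (cos t ^ j * cos (real k' * t)))"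
      using IH[of "k+1"] IH[of k'] prems Suc by (intro Pq_lin) auto
    have E: "(1/2) * (cos t ^ j * cos (real (k+1) * t)) + (1/2) * (cos t ^ j * cos (real k' * t))
        = cos t ^ Suc j * cos (real k * t)" for t
    proof -
      have h0: "cos (real k * t) * cos t = (cos (real k * t - t) + cos (real k * t + t)) / 2"
        by (rule cos_times_cos)
      have e1: "real k * t - t = real k' * t" and e2: "real k * t + t = real (k+1) * t"
        using Suc by (simp_all add: algebra_simps)
      have h: "cos t * cos (real k * t) = (cos (real k' * t) + cos (real (k+1) * t)) / 2"
      proof -
        have "cos t * cos (real k * t) = cos (real k * t) * cos t" by (rule mult.commute)
        also have "\<dots> = (cos (real k * t - t) + cos (real k * t + t)) / 2" by (rule h0)
        also have "\<dots> = (cos (real k' * t) + cos (real (k+1) * t)) / 2" unfolding e1 e2 by (rule refl)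
        finally show ?thesis .
      qed
      have "cos t ^ Suc j * cos (real k * t) = cos t ^ j * (cos t * cos (real k * t))"
        by (simp only: power_Suc mult_ac)
      also have "\<dots> = cos t ^ j * ((cos (real k' * t) + cos (real (k+1) * t)) / 2)"
        by (simp only: h)
      finally show ?thesis by (simp add: algebra_simps)
    qed
    have "(\<lambda>t. (1/2) * (cos t ^ j * cos (real (k+1) * t)) + (1/2) * (cos t ^ j * cos (real k' * t)))
       = (\<lambda>t. cos t ^ Suc j * cos (real k * t))" by (rule ext) (rule E)
    with P1 show ?thesis by (simp only:)
  qed
qed

theorem lemma1:
  fixes M \<alpha> :: nat and f :: "real poly"
  assumes "M \<ge> 1" and "degree f \<le> M"
  shows "integral {0..pi} (\<lambda>\<theta>. poly f (cos \<theta>) * sin \<theta> ^ \<alpha>)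
           = (\<Sum>u = 0..M. quad_chi M \<alpha> u * poly f (cos (real u * pi / real M)))"
proof -
  have P: "Pq M \<alpha> (\<lambda>t. cos t ^ j)" if "j \<le> M" for j
    using Pq_Q[OF assms(1), of 0 j \<alpha>] that by simp
  have I: "((\<lambda>t. \<Sum>j\<le>degree f. coeff f j * (cos t ^ j * sin t ^ \<alpha>)) has_integral
        (\<Sum>j\<le>degree f. coeff f j * (\<Sum>u=0..M. quad_chi M \<alpha> u * cos (real u * pi / real M) ^ j))) {0..pi}"
    using P assms(2) unfolding Pq_def by (intro has_integral_sum has_integral_mult_right) auto
  have E1: "(\<lambda>t. \<Sum>j\<le>degree f. coeff f j * (cos t ^ j * sin t ^ \<alpha>)) = (\<lambda>\<theta>. poly f (cos \<theta>) * sin \<theta> ^ \<alpha>)"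
    by (rule ext) (simp only: poly_altdef sum_distrib_right mult.assoc)
  have E2: "(\<Sum>j\<le>degree f. coeff f j * (\<Sum>u=0..M. quad_chi M \<alpha> u * cos (real u * pi / real M) ^ j))
      = (\<Sum>u = 0..M. quad_chi M \<alpha> u * poly f (cos (real u * pi / real M)))"
  proof -
  have "(\<Sum>j\<le>degree f. coeff f j * (\<Sum>u=0..M. quad_chi M \<alpha> u * cos (real u * pi / real M) ^ j))
      = (\<Sum>j\<le>degree f. \<Sum>u=0..M. coeff f j * (quad_chi M \<alpha> u * cos (real u * pi / real M) ^ j))"
    by (simp only: sum_distrib_left)
  also have "\<dots> = (\<Sum>u=0..M. \<Sum>j\<le>degree f. coeff f j * (quad_chi M \<alpha> u * cos (real u * pi / real M) ^ j))"
    by (rule sum.swap)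
  also have "\<dots> = (\<Sum>u = 0..M. quad_chi M \<alpha> u * poly f (cos (real u * pi / real M)))"
    by (simp only: poly_altdef sum_distrib_left) (intro sum.cong refl mult.left_commute)
  finally show ?thesis .
  qed
  show ?thesis using I unfolding E1 E2 by (rule integral_unique)
qed

end
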